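(* Let $m\ge1$, let $\mathcal{X},\mathcal{A}_1,\dots,\mathcal{A}_m$ be finite sets with $|\mathcal{X}|=d\ge2$, and let $P$ be a probability distribution on $\mathcal{X}\times\mathcal{A}_1\times\cdots\times\mathcal{A}_m$ such that $\omega_{\mathrm{c}}<\omega_{\mathrm{ns}}$. Then there is a no-signalling correlation $Q$ which is a vertex of the no-signalling polytope, which attains $\omega_{\mathrm{ns}}$, and for which there exist $x\in\mathcal{X}$ and $a_1\in\mathcal{A}_1,\dots,a_m\in\mathcal{A}_m$ with $Q(x,\dots,x|a_1,\dots,a_m)>1/d$.
   Context: $\delta$ is the indicator function. An $m$-partite no-signalling correlation is a conditional distribution $Q(x_1,\dots,x_m|a_1,\dots,a_m)$ on $\mathcal{X}^m$ given $(a_1,\dots,a_m)\in\mathcal{A}_1\times\cdots\times\mathcal{A}_m$ such that for every index set $I\subset\{1,\dots,m\}$ with complement $J$, $\sum_{x_J}Q(x_I,x_J|a_I,a_J)$ does not depend on $a_J$; the set of all such $Q$ is a convex polytope (the no-signalling polytope). $\omega_{\mathrm{ns}}=\max_Q\sum_{x,a_1,\dots,a_m}P(x,a_1,\dots,a_m)Q(x,\dots,x|a_1,\dots,a_m)$ over no-signalling $Q$, and $\omega_{\mathrm{c}}=\max_{f_1,\dots,f_m}\sum P(x,a_1,\dots,a_m)\delta[f_1(a_1)=\cdots=f_m(a_m)=x]$ over functions $f_i\colon\mathcal{A}_i\to\mathcal{X}$. *)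

theory Defs
  imports "HOL-Analysis.Analysis"
begin

text \<open>A correlation is Q : (nat => 'x) => (nat => 'a) => real,
 Q xs a = Q(xs|a).\<close>

definition questions :: "nat \<Rightarrow> (nat \<Rightarrow> 'a set) \<Rightarrow> (nat \<Rightarrow> 'a) set" where
  "questions m A = PiE {0..<m} A"

definition answers :: "nat \<Rightarrow> 'x set \<Rightarrow> (nat \<Rightarrow> 'x) set" where
  "answers m X = PiE {0..<m} (\<lambda>_. X)"

definition diag :: "nat \<Rightarrow> 'x \<Rightarrow> (nat \<Rightarrow> 'x)" where
  "diag m x = (\<lambda>i\<in>{0..<m}. x)"

definition no_signalling ::
  "nat \<Rightarrow> 'x set \<Rightarrow> (nat \<Rightarrow> 'a set) \<Rightarrow> ((nat \<Rightarrow> 'x) \<Rightarrow> (nat \<Rightarrow> 'a) \<Rightarrow> real) set" where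
  "no_signalling m X A = {Q.
     (\<forall>xs a. (xs \<notin> answers m X \<or> a \<notin> questions m A) \<longrightarrow> Q xs a = 0) \<and>
     (\<forall>a\<in>questions m A. (\<forall>xs\<in>answers m X. Q xs a \<ge> 0) \<and> (\<Sum>xs\<in>answers m X. Q xs a) = 1) \<and>
     (\<forall>I. I \<subseteq> {0..<m} \<longrightarrow>
        (\<forall>a\<in>questions m A. \<forall>a'\<in>questions m A. (\<forall>i\<in>I. a i = a' i) \<longrightarrow>
          (\<forall>xs\<in>answers m X.
             (\<Sum>ys\<in>{ys\<in>answers m X. \<forall>i\<in>I. ys i = xs i}. Q ys a)
           = (\<Sum>ys\<in>{ys\<in>answers m X. \<forall>i\<in>I. ys i = xs i}. Q ys a'))))}"

definition is_vertex :: "('b \<Rightarrow> 'c \<Rightarrow> real) \<Rightarrow> ('b \<Rightarrow> 'c \<Rightarrow> real) set \<Rightarrow> bool" where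
  "is_vertex Q S \<longleftrightarrow> Q \<in> S \<and>
     (\<forall>Q1\<in>S. \<forall>Q2\<in>S. \<forall>t::real. 0 < t \<and> t < 1 \<and> Q = (\<lambda>u v. t * Q1 u v + (1 - t) * Q2 u v)
        \<longrightarrow> Q1 = Q2)"

definition win_ns ::
  "nat \<Rightarrow> 'x set \<Rightarrow> (nat \<Rightarrow> 'a set) \<Rightarrow> ('x \<Rightarrow> (nat \<Rightarrow> 'a) \<Rightarrow> real)
     \<Rightarrow> ((nat \<Rightarrow> 'x) \<Rightarrow> (nat \<Rightarrow> 'a) \<Rightarrow> real) \<Rightarrow> real" where
  "win_ns m X A P Q = (\<Sum>x\<in>X. \<Sum>a\<in>questions m A. P x a * Q (diag m x) a)"

definition omega_ns :: "nat \<Rightarrow> 'x set \<Rightarrow> (nat \<Rightarrow> 'a set) \<Rightarrow> ('x \<Rightarrow> (nat \<Rightarrow> 'a) \<Rightarrow> real) \<Rightarrow> real" where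
  "omega_ns m X A P = (SUP Q\<in>no_signalling m X A. win_ns m X A P Q)"

definition win_c ::
  "nat \<Rightarrow> 'x set \<Rightarrow> (nat \<Rightarrow> 'a set) \<Rightarrow> ('x \<Rightarrow> (nat \<Rightarrow> 'a) \<Rightarrow> real)
     \<Rightarrow> (nat \<Rightarrow> 'a \<Rightarrow> 'x) \<Rightarrow> real" where
  "win_c m X A P f = (\<Sum>x\<in>X. \<Sum>a\<in>questions m A. P x a * (if \<forall>i<m. f i (a i) = x then 1 else 0))"

definition omega_c :: "nat \<Rightarrow> 'x set \<Rightarrow> (nat \<Rightarrow> 'a set) \<Rightarrow> ('x \<Rightarrow> (nat \<Rightarrow> 'a) \<Rightarrow> real) \<Rightarrow> real" where
  "omega_c m X A P = (SUP f\<in>{f. \<forall>i<m. f i \<in> A i \<rightarrow> X}. win_c m X A P f)"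

definition prob_dist :: "nat \<Rightarrow> 'x set \<Rightarrow> (nat \<Rightarrow> 'a set) \<Rightarrow> ('x \<Rightarrow> (nat \<Rightarrow> 'a) \<Rightarrow> real) \<Rightarrow> bool" where
  "prob_dist m X A P \<longleftrightarrow> (\<forall>x\<in>X. \<forall>a\<in>questions m A. P x a \<ge> 0) \<and>
     (\<Sum>x\<in>X. \<Sum>a\<in>questions m A. P x a) = 1"

end

theory Submission
  imports Defs
begin

lemma ns_zero: "Q \<in> no_signalling m X A \<Longrightarrow> (xs \<notin> answers m X \<or> a \<notin> questions m A) \<Longrightarrow> Q xs a = 0"
  unfolding no_signalling_def by blast

lemma ns_nonneg: "Q \<in> no_signalling m X A \<Longrightarrow> Q xs a \<ge> 0"
  unfolding no_signalling_def by (cases "xs \<in> answers m X \<and> a \<in> questions m A") auto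

lemma ns_sum: "Q \<in> no_signalling m X A \<Longrightarrow> a \<in> questions m A \<Longrightarrow> (\<Sum>xs\<in>answers m X. Q xs a) = 1"
  unfolding no_signalling_def by blast

lemma sum_line: "(\<Sum>y\<in>S. f y + (s::real)*(g y - h y)) = sum f S + s*(sum g S - sum h S)"
  by (simp add: sum.distrib sum_subtractf[symmetric] sum_distrib_left)

lemma ns_line:
  assumes "Q \<in> no_signalling m X A" "Q1 \<in> no_signalling m X A" "Q2 \<in> no_signalling m X A"
    and "\<forall>xs\<in>answers m X. \<forall>a\<in>questions m A. Q xs a + s * (Q1 xs a - Q2 xs a) \<ge> 0"
  shows "(\<lambda>u v. Q u v + s * (Q1 u v - Q2 u v)) \<in> no_signalling m X A"
proof -
  have z: "\<And>Q'. Q' \<in> no_signalling m X A \<Longrightarrow> (\<forall>xs a. (xs \<notin> answers m X \<or> a \<notin> questions m A) \<longrightarrow> Q' xs a = 0)"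
    unfolding no_signalling_def by blast
  have s: "\<And>Q'. Q' \<in> no_signalling m X A \<Longrightarrow> (\<forall>a\<in>questions m A. (\<Sum>xs\<in>answers m X. Q' xs a) = 1)"
    unfolding no_signalling_def by blast
  have mg: "\<And>Q'. Q' \<in> no_signalling m X A \<Longrightarrow> (\<forall>I. I \<subseteq> {0..<m} \<longrightarrow>
        (\<forall>a\<in>questions m A. \<forall>a'\<in>questions m A. (\<forall>i\<in>I. a i = a' i) \<longrightarrow>
          (\<forall>xs\<in>answers m X.
             (\<Sum>ys\<in>{ys\<in>answers m X. \<forall>i\<in>I. ys i = xs i}. Q' ys a)
           = (\<Sum>ys\<in>{ys\<in>answers m X. \<forall>i\<in>I. ys i = xs i}. Q' ys a'))))"
    unfolding no_signalling_def by blast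
  show ?thesis
    unfolding no_signalling_def
  proof (intro CollectI conjI allI impI ballI)
    fix xs a assume "xs \<notin> answers m X \<or> a \<notin> questions m A"
    then show "Q xs a + s * (Q1 xs a - Q2 xs a) = 0" using z[OF assms(1)] z[OF assms(2)] z[OF assms(3)] by auto
  next
    fix xs a assume "a \<in> questions m A" "xs \<in> answers m X"
    then show "0 \<le> Q xs a + s * (Q1 xs a - Q2 xs a)" using assms(4) by auto
  next
    fix a assume a: "a \<in> questions m A"
    show "(\<Sum>xs\<in>answers m X. Q xs a + s * (Q1 xs a - Q2 xs a)) = 1"
      using s[OF assms(1)] s[OF assms(2)] s[OF assms(3)] a
      unfolding sum_line by simp
  next
    fix I a a' xs assume H: "I \<subseteq> {0..<m}" "a \<in> questions m A" "a' \<in> questions m A" "\<forall>i\<in>I. a i = a' i" "xs \<in> answers m X"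
    let ?T = "{ys \<in> answers m X. \<forall>i\<in>I. ys i = xs i}"
    have e: "(\<Sum>ys\<in>?T. Q' ys a) = (\<Sum>ys\<in>?T. Q' ys a')" if "Q' \<in> no_signalling m X A" for Q'
      using mg[OF that] H by blast
    show "(\<Sum>ys\<in>{ys \<in> answers m X. \<forall>i\<in>I. ys i = xs i}. Q ys a + s * (Q1 ys a - Q2 ys a)) =
       (\<Sum>ys\<in>{ys \<in> answers m X. \<forall>i\<in>I. ys i = xs i}. Q ys a' + s * (Q1 ys a' - Q2 ys a'))"
      unfolding sum_line e[OF assms(1)] e[OF assms(2)] e[OF assms(3)] ..
  qed
qed

lemma win_line: "win_ns m X A P (\<lambda>u v. Q u v + s * (Q1 u v - Q2 u v)) =
   win_ns m X A P Q + s * (win_ns m X A P Q1 - win_ns m X A P Q2)"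
proof -
  have "\<And>x. (\<Sum>a\<in>questions m A. P x a * (Q (diag m x) a + s * (Q1 (diag m x) a - Q2 (diag m x) a)))
    = (\<Sum>a\<in>questions m A. P x a * Q (diag m x) a) + s * ((\<Sum>a\<in>questions m A. P x a * Q1 (diag m x) a) - (\<Sum>a\<in>questions m A. P x a * Q2 (diag m x) a))"
    by (simp add: sum.distrib sum_subtractf sum_distrib_left right_diff_distrib distrib_left algebra_simps)
  then show ?thesis unfolding win_ns_def by (simp add: sum_line)
qed

lemma ns_differ:
  assumes "finite X" "Q1 \<in> no_signalling m X A" "Q2 \<in> no_signalling m X A" "Q1 \<noteq> Q2"
  shows "\<exists>xs\<in>answers m X. \<exists>a\<in>questions m A. Q1 xs a < Q2 xs a"
proof (rule ccontr)
  assume c: "\<not> ?thesis"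
  obtain u v where uv: "Q1 u v \<noteq> Q2 u v" using assms(4) by (meson ext)
  have u: "u \<in> answers m X" and v: "v \<in> questions m A"
    using uv ns_zero[OF assms(2)] ns_zero[OF assms(3)] by metis+
  have fin: "finite (answers m X)" unfolding answers_def using assms(1) by (simp add: finite_PiE)
  have "(\<Sum>xs\<in>answers m X. Q2 xs v) < (\<Sum>xs\<in>answers m X. Q1 xs v)"
    apply (rule sum_strict_mono_ex1[OF fin])
    using c v u uv by force+
  then show False using ns_sum[OF assms(2) v] ns_sum[OF assms(3) v] by simp
qed

definition nsupp :: "nat \<Rightarrow> 'x set \<Rightarrow> (nat \<Rightarrow> 'a set) \<Rightarrow> ((nat \<Rightarrow> 'x) \<Rightarrow> (nat \<Rightarrow> 'a) \<Rightarrow> real) \<Rightarrow> ((nat \<Rightarrow> 'x) \<times> (nat \<Rightarrow> 'a)) set" where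
  "nsupp m X A Q = {(xs,a). xs \<in> answers m X \<and> a \<in> questions m A \<and> Q xs a \<noteq> 0}"

lemma fin_dom:
  assumes "finite X" "\<forall>i<m. finite (A i)"
  shows "finite (answers m X \<times> questions m A)"
  using assms unfolding answers_def questions_def by (auto intro!: finite_PiE)

lemma nsupp_fin:
  assumes "finite X" "\<forall>i<m. finite (A i)"
  shows "finite (nsupp m X A Q)"
  by (rule finite_subset[OF _ fin_dom[OF assms]]) (auto simp: nsupp_def)

lemma conv_zero:
  fixes t x y :: real
  assumes "0 < t" "t < 1" "0 \<le> x" "0 \<le> y" "t * x + (1 - t) * y = 0"
  shows "x = 0 \<and> y = 0"
proof -
  have "t * x \<ge> 0" "(1 - t) * y \<ge> 0" using assms by auto
  then have "t * x = 0" "(1-t) * y = 0" using assms(5) by linarith+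
  then show ?thesis using assms(1,2) by auto
qed

lemma reduce:
  assumes fin: "finite X" "\<forall>i<m. finite (A i)"
    and Q: "Q \<in> no_signalling m X A" and nv: "\<not> is_vertex Q (no_signalling m X A)"
  shows "\<exists>R\<in>no_signalling m X A. win_ns m X A P Q \<le> win_ns m X A P R \<and> nsupp m X A R \<subset> nsupp m X A Q"
proof -
  let ?NS = "no_signalling m X A"
  let ?w = "win_ns m X A P"
  obtain Q1 Q2 t where q1: "Q1 \<in> ?NS" and q2: "Q2 \<in> ?NS" and t: "0 < t" "t < 1"
    and qe: "Q = (\<lambda>u v. t * Q1 u v + (1 - t) * Q2 u v)" and ne: "Q1 \<noteq> Q2"
    using nv Q unfolding is_vertex_def by blast
  have zz: "Q1 u v = 0 \<and> Q2 u v = 0" if "Q u v = 0" for u v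
    using conv_zero[OF t ns_nonneg[OF q1] ns_nonneg[OF q2]] that qe by metis
  obtain B1 B2 where b1: "B1 \<in> ?NS" and b2: "B2 \<in> ?NS" and bne: "B1 \<noteq> B2"
    and bw: "?w B2 \<le> ?w B1" and bz: "\<And>u v. Q u v = 0 \<Longrightarrow> B1 u v = 0 \<and> B2 u v = 0"
  proof (cases "?w Q2 \<le> ?w Q1")
    case True then show ?thesis using that[OF q1 q2 ne] zz by blast
  next
    case False then show ?thesis using that[OF q2 q1 ne[symmetric]] zz by force
  qed
  define N where "N = {e \<in> answers m X \<times> questions m A. B1 (fst e) (snd e) < B2 (fst e) (snd e)}"
  have finN: "finite N" unfolding N_def using fin_dom[OF fin] by simp
  have neN: "N \<noteq> {}" using ns_differ[OF fin(1) b1 b2 bne] unfolding N_def by auto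
  define r where "r = (\<lambda>e. Q (fst e) (snd e) / (B2 (fst e) (snd e) - B1 (fst e) (snd e)))"
  define s where "s = Min (r ` N)"
  have "s \<in> r ` N" unfolding s_def using finN neN by simp
  then obtain e where eN: "e \<in> N" and se: "s = r e" by blast
  have s_le: "s \<le> r e'" if "e' \<in> N" for e' unfolding s_def using finN that by simp
  have s_nn: "0 \<le> s" using eN se unfolding r_def N_def by (auto intro!: divide_nonneg_pos ns_nonneg[OF Q])
  define R where "R = (\<lambda>u v. Q u v + s * (B1 u v - B2 u v))"
  have Rnn: "\<forall>xs\<in>answers m X. \<forall>a\<in>questions m A. Q xs a + s * (B1 xs a - B2 xs a) \<ge> 0"
  proof (intro ballI)
    fix xs a assume xa: "xs \<in> answers m X" "a \<in> questions m A"
    show "Q xs a + s * (B1 xs a - B2 xs a) \<ge> 0"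
    proof (cases "B1 xs a < B2 xs a")
      case True
      then have "(xs,a) \<in> N" unfolding N_def using xa by auto
      then have "s \<le> Q xs a / (B2 xs a - B1 xs a)" using s_le r_def by fastforce
      then have "s * (B2 xs a - B1 xs a) \<le> Q xs a" using True by (simp add: pos_le_divide_eq)
      then show ?thesis by (simp add: algebra_simps)
    next
      case False
      then show ?thesis using s_nn ns_nonneg[OF Q, of xs a] by (simp add: add_nonneg_nonneg)
    qed
  qed
  have RNS: "R \<in> ?NS" unfolding R_def by (rule ns_line[OF Q b1 b2 Rnn])
  have Rw: "?w Q \<le> ?w R" unfolding R_def win_line using s_nn bw by simp
  have sub: "nsupp m X A R \<subseteq> nsupp m X A Q"
    unfolding nsupp_def R_def using bz by auto
  obtain xs a where ee: "e = (xs, a)" by (cases e)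
  have eQ: "e \<in> nsupp m X A Q" using eN bz unfolding N_def nsupp_def ee by force
  have "B1 xs a < B2 xs a" using eN unfolding N_def ee by simp
  then have "R xs a = 0" unfolding R_def using se unfolding r_def ee by (simp add: field_simps)
  then have "e \<notin> nsupp m X A R" unfolding nsupp_def ee by simp
  then show ?thesis using RNS Rw sub eQ by blast
qed

lemma dominate:
  assumes fin: "finite X" "\<forall>i<m. finite (A i)"
  shows "Q \<in> no_signalling m X A \<Longrightarrow> \<exists>V. is_vertex V (no_signalling m X A) \<and> win_ns m X A P Q \<le> win_ns m X A P V"
proof (induction "card (nsupp m X A Q)" arbitrary: Q rule: less_induct)
  case less
  show ?case
  proof (cases "is_vertex Q (no_signalling m X A)")
    case True then show ?thesis by auto
  next
    case False
    then obtain R where R: "R \<in> no_signalling m X A" "win_ns m X A P Q \<le> win_ns m X A P R"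
      "nsupp m X A R \<subset> nsupp m X A Q" using reduce[OF fin less.prems] by blast
    have "card (nsupp m X A R) < card (nsupp m X A Q)"
      using R(3) nsupp_fin[OF fin] by (simp add: psubset_card_mono)
    then obtain V where "is_vertex V (no_signalling m X A)" "win_ns m X A P R \<le> win_ns m X A P V"
      using less.hyps R(1) by blast
    then show ?thesis using R(2) by auto
  qed
qed

lemma vertex_inj:
  assumes fin: "finite X" "\<forall>i<m. finite (A i)"
    and V: "is_vertex V (no_signalling m X A)" and W: "is_vertex W (no_signalling m X A)"
    and eq: "nsupp m X A V = nsupp m X A W"
  shows "V = W"
proof (rule ccontr)
  assume ne: "V \<noteq> W"
  let ?NS = "no_signalling m X A"
  have VN: "V \<in> ?NS" and WN: "W \<in> ?NS" using V W unfolding is_vertex_def by auto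
  define S where "S = nsupp m X A V"
  have finS: "finite S" unfolding S_def using nsupp_fin[OF fin] .
  define g where "g = (\<lambda>e. V (fst e) (snd e) / (\<bar>V (fst e) (snd e) - W (fst e) (snd e)\<bar> + 1))"
  define ep where "ep = Min (insert 1 (g ` S))"
  have Vpos: "V xs a > 0" if "(xs,a) \<in> S" for xs a
    using that ns_nonneg[OF VN, of xs a] unfolding S_def nsupp_def by auto
  have ep_pos: "ep > 0" unfolding ep_def using finS
    by (auto simp: g_def intro!: divide_pos_pos Vpos)
  have ep_le: "ep \<le> g e" if "e \<in> S" for e unfolding ep_def using finS that by simp
  have bound: "\<bar>ep * (V xs a - W xs a)\<bar> \<le> V xs a" if "xs \<in> answers m X" "a \<in> questions m A" for xs a
  proof (cases "(xs,a) \<in> S")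
    case True
    let ?D = "\<bar>V xs a - W xs a\<bar>"
    have "ep \<le> V xs a / (?D + 1)" using ep_le[OF True] unfolding g_def by simp
    then have "ep * (?D + 1) \<le> V xs a" by (simp add: pos_le_divide_eq)
    moreover have "ep * ?D \<le> ep * (?D + 1)" using ep_pos by simp
    ultimately show ?thesis using ep_pos by (simp add: abs_mult distrib_left)
  next
    case False
    then have "V xs a = 0" "W xs a = 0" using that eq unfolding S_def nsupp_def by auto
    then show ?thesis by simp
  qed
  have R1: "(\<lambda>u v. V u v + ep * (V u v - W u v)) \<in> ?NS"
    apply (rule ns_line[OF VN VN WN])
    using bound by (smt (verit))
  have R2: "(\<lambda>u v. V u v + (-ep) * (V u v - W u v)) \<in> ?NS"
    apply (rule ns_line[OF VN VN WN])
    using bound by (smt (verit) mult_minus_left)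
  have "V = (\<lambda>u v. (1/2) * (V u v + ep * (V u v - W u v)) + (1 - 1/2) * (V u v + (-ep) * (V u v - W u v)))"
    by (auto simp: algebra_simps)
  then have "(\<lambda>u v. V u v + ep * (V u v - W u v)) = (\<lambda>u v. V u v + (-ep) * (V u v - W u v))"
  proof -
    have "\<forall>Q1\<in>?NS. \<forall>Q2\<in>?NS. \<forall>t::real. 0 < t \<and> t < 1 \<and> V = (\<lambda>u v. t * Q1 u v + (1 - t) * Q2 u v) \<longrightarrow> Q1 = Q2"
      using V unfolding is_vertex_def by blast
    from this[rule_format, OF R1 R2, of "1/2"] show ?thesis using \<open>V = _\<close> by simp
  qed
  then have "\<And>u v. V u v + ep * (V u v - W u v) = V u v + (-ep) * (V u v - W u v)" by metis
  then have "\<And>u v. V u v = W u v" using ep_pos by (simp add: algebra_simps)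
  then show False using ne by (auto intro!: ext)
qed

lemma Q0_ns:
  assumes x0: "x0 \<in> X" and fin: "finite X"
  shows "(\<lambda>xs a. if xs = diag m x0 \<and> a \<in> questions m A then 1 else 0) \<in> no_signalling m X A"
proof -
  have dA: "diag m x0 \<in> answers m X" unfolding diag_def answers_def using x0 by auto
  have fA: "finite (answers m X)" unfolding answers_def using fin by (simp add: finite_PiE)
  show ?thesis
    unfolding no_signalling_def
  proof (intro CollectI conjI allI impI ballI)
    fix xs a assume "xs \<notin> answers m X \<or> a \<notin> questions m A"
    then show "(if xs = diag m x0 \<and> a \<in> questions m A then 1 else 0) = (0::real)" using dA by auto
  next
    fix a xs show "0 \<le> (if xs = diag m x0 \<and> a \<in> questions m A then 1 else (0::real))" by simp
  next
    fix a assume a: "a \<in> questions m A"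
    show "(\<Sum>xs\<in>answers m X. if xs = diag m x0 \<and> a \<in> questions m A then 1 else (0::real)) = 1"
      using a dA fA by simp
  next
    fix I a a' xs assume "a \<in> questions m A" "a' \<in> questions m A"
    then show "(\<Sum>ys\<in>{ys \<in> answers m X. \<forall>i\<in>I. ys i = xs i}. if ys = diag m x0 \<and> a \<in> questions m A then 1 else (0::real)) =
       (\<Sum>ys\<in>{ys \<in> answers m X. \<forall>i\<in>I. ys i = xs i}. if ys = diag m x0 \<and> a' \<in> questions m A then 1 else 0)"
      by simp
  qed
qed

theorem mainTheorem10:
  fixes m :: nat and X :: "'x set" and A :: "nat \<Rightarrow> 'a set" and d :: nat
    and P :: "'x \<Rightarrow> (nat \<Rightarrow> 'a) \<Rightarrow> real"
  assumes "m \<ge> 1"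
    and "finite X" and "\<forall>i<m. finite (A i)"
    and "card X = d" and "d \<ge> 2"
    and "prob_dist m X A P"
    and "omega_c m X A P < omega_ns m X A P"
  shows "\<exists>Q. is_vertex Q (no_signalling m X A) \<and> win_ns m X A P Q = omega_ns m X A P \<and>
           (\<exists>x\<in>X. \<exists>a\<in>questions m A. Q (diag m x) a > 1 / real d)"
proof -
  note m1 = assms(1) and finX = assms(2) and finA = assms(3) and cd = assms(4) and d2 = assms(5)
    and pd = assms(6) and lt = assms(7)
  let ?NS = "no_signalling m X A"
  let ?w = "win_ns m X A P"
  let ?Qs = "questions m A"
  define Vs where "Vs = {V. is_vertex V ?NS}"
  have "X \<noteq> {}" using cd d2 by auto
  then obtain x0 where x0: "x0 \<in> X" by blast
  have Q0: "(\<lambda>xs a. if xs = diag m x0 \<and> a \<in> ?Qs then 1 else 0) \<in> ?NS"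
    by (rule Q0_ns[OF x0 finX])
  have "inj_on (nsupp m X A) Vs" unfolding Vs_def inj_on_def
    using vertex_inj[OF finX finA] by blast
  moreover have "nsupp m X A ` Vs \<subseteq> Pow (answers m X \<times> ?Qs)"
    unfolding nsupp_def by auto
  ultimately have finV: "finite Vs"
    using fin_dom[OF finX finA] by (meson finite_Pow_iff finite_imageD finite_subset)
  obtain V0 where "is_vertex V0 ?NS" using dominate[OF finX finA Q0] by blast
  then have neV: "Vs \<noteq> {}" unfolding Vs_def by blast
  have "Max (?w ` Vs) \<in> ?w ` Vs" using finV neV by simp
  then obtain V where VV: "V \<in> Vs" and Vmax: "?w V = Max (?w ` Vs)" by auto
  have Vv: "is_vertex V ?NS" using VV unfolding Vs_def by simp
  then have VN: "V \<in> ?NS" unfolding is_vertex_def by simp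
  have upper: "?w Q \<le> ?w V" if QN: "Q \<in> ?NS" for Q
  proof -
    obtain W where "is_vertex W ?NS" "?w Q \<le> ?w W" using dominate[OF finX finA QN] by blast
    moreover have "?w W \<le> Max (?w ` Vs)" using finV \<open>is_vertex W ?NS\<close> unfolding Vs_def by simp
    ultimately show ?thesis using Vmax by simp
  qed
  have om: "omega_ns m X A P = ?w V"
    unfolding omega_ns_def using VN upper by (intro cSup_eq_maximum) auto
  have Pnn: "\<And>x a. x \<in> X \<Longrightarrow> a \<in> ?Qs \<Longrightarrow> P x a \<ge> 0" and Psum: "(\<Sum>x\<in>X. \<Sum>a\<in>?Qs. P x a) = 1"
    using pd unfolding prob_dist_def by auto
  have bdd: "bdd_above ((win_c m X A P) ` {f. \<forall>i<m. f i \<in> A i \<rightarrow> X})"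
  proof (rule bdd_aboveI2)
    fix f
    have "win_c m X A P f \<le> (\<Sum>x\<in>X. \<Sum>a\<in>?Qs. P x a)"
      unfolding win_c_def by (intro sum_mono) (auto simp: Pnn)
    then show "win_c m X A P f \<le> 1" using Psum by simp
  qed
  have cge: "(\<Sum>a\<in>?Qs. P x a) \<le> omega_c m X A P" if x: "x \<in> X" for x
  proof -
    have ind: "(\<forall>i<m. (\<lambda>i (_::'a). x) i (a i) = x') \<longleftrightarrow> x = x'" for a x'
      using m1 by (metis One_nat_def less_eq_Suc_le)
    have "win_c m X A P (\<lambda>i _. x) = (\<Sum>x'\<in>X. if x = x' then (\<Sum>a\<in>?Qs. P x' a) else 0)"
      unfolding win_c_def ind by (intro sum.cong) auto
    also have "\<dots> = (\<Sum>a\<in>?Qs. P x a)" using x finX by simp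
    finally have e: "win_c m X A P (\<lambda>i _. x) = (\<Sum>a\<in>?Qs. P x a)" .
    have "win_c m X A P (\<lambda>i _. x) \<le> omega_c m X A P"
      unfolding omega_c_def by (rule cSUP_upper[OF _ bdd]) (use x in auto)
    then show ?thesis using e by simp
  qed
  have "1 \<le> (\<Sum>x\<in>X. omega_c m X A P)" using Psum sum_mono[of X "\<lambda>x. \<Sum>a\<in>?Qs. P x a" "\<lambda>_. omega_c m X A P"] cge by simp
  then have c1: "1 \<le> real d * omega_c m X A P" using cd by simp
  have "\<exists>x\<in>X. \<exists>a\<in>?Qs. V (diag m x) a > 1 / real d"
  proof (rule ccontr)
    assume "\<not> ?thesis"
    then have le: "\<And>x a. x \<in> X \<Longrightarrow> a \<in> ?Qs \<Longrightarrow> V (diag m x) a \<le> 1 / real d" by force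
    have "?w V \<le> (\<Sum>x\<in>X. \<Sum>a\<in>?Qs. P x a * (1 / real d))"
      unfolding win_ns_def by (intro sum_mono mult_left_mono) (auto simp: le Pnn)
    also have "\<dots> = (\<Sum>x\<in>X. \<Sum>a\<in>?Qs. P x a) / real d" by (simp add: sum_divide_distrib)
    also have "\<dots> = 1 / real d" using Psum by simp
    finally have "?w V \<le> 1 / real d" .
    moreover have "1 / real d \<le> omega_c m X A P" using c1 d2 by (simp add: divide_le_eq mult.commute)
    ultimately show False using lt om by simp
  qed
  then show ?thesis using Vv om by auto
qed

end
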